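(* Let $r$ be an odd integer. Let $n>1$ be an odd integer with $n\equiv -r\pmod{4}$ and $n\geqslant \max\{r,4-r\}$. Then \[ \sum_{k=0}^{n-1}[8k+r]\frac{(q^r;q^4)_k^4}{(q^4;q^4)_k^4}q^{(4-2r)k} \equiv 0\pmod{\Phi_n(q)^2}. \]
   Context: $q$ is an indeterminate. The $q$-shifted factorial is $(a;q)_k=(1-a)(1-aq)\cdots(1-aq^{k-1})$ (with $(a;q)_0=1$), for any Laurent monomial $a$ in $q$. For any integer $m$ (including negative $m$), $[m]=(1-q^m)/(1-q)$. $\Phi_n(q)$ denotes the $n$-th cyclotomic polynomial. A congruence of rational functions modulo a polynomial $P(q)$, where the denominators are coprime to $P(q)$, means that $P(q)$ divides the numerator of the difference in lowest terms. *)

theory Defs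
  imports Complex_Main "HOL-Computational_Algebra.Polynomial" "HOL-Computational_Algebra.Fraction_Field"
begin

type_synonym ratfun = "complex poly fract"

definition qvar :: ratfun where
  "qvar = Fract [:0, 1:] 1"

definition qpoch :: "ratfun \<Rightarrow> ratfun \<Rightarrow> nat \<Rightarrow> ratfun" where
  "qpoch a b k = (\<Prod>j<k. 1 - a * b ^ j)"

definition qint :: "int \<Rightarrow> ratfun" where
  "qint m = (1 - qvar powi m) / (1 - qvar)"

definition cyclotomic :: "nat \<Rightarrow> complex poly" where
  "cyclotomic n = (\<Prod>k \<in> {k. 1 \<le> k \<and> k \<le> n \<and> coprime k n}.
       [:- cis (2 * pi * real k / real n), 1:])"

text \<open>x \<equiv> 0 modulo P: x = A/B with B coprime to P and P dividing A
  (equivalently, P divides the numerator of x in lowest terms).\<close>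
definition cong0_ratfun :: "ratfun \<Rightarrow> complex poly \<Rightarrow> bool" where
  "cong0_ratfun x P \<longleftrightarrow>
     (\<exists>A B. B \<noteq> 0 \<and> coprime B P \<and> P dvd A \<and> x = Fract A B)"

end

theory Submission
  imports Defs "HOL-Computational_Algebra.Polynomial_Factorial" "HOL-Computational_Algebra.Field_as_Ring"
begin


definition gp :: "'a::field \<Rightarrow> 'a \<Rightarrow> nat \<Rightarrow> 'a" where
  "gp p a k = (\<Prod>j<k. 1 - a * p^j)"
definition Pn :: "'a::field \<Rightarrow> nat \<Rightarrow> nat \<Rightarrow> 'a" where
  "Pn p N k = (\<Prod>j<k. p^N - p^j)"
definition aa :: "'a::field \<Rightarrow> 'a \<Rightarrow> 'a \<Rightarrow> nat \<Rightarrow> 'a" where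
  "aa p A c k = gp p A k ^ 2 * gp p c k / (gp p p k ^ 2 * gp p (A*p/c) k) * (p/c)^k"
definition ss :: "'a::field \<Rightarrow> 'a \<Rightarrow> 'a \<Rightarrow> nat \<Rightarrow> nat \<Rightarrow> 'a" where
  "ss p A c N k = (1 - A*p^(2*k))/(1-A) * aa p A c k * Pn p N k / gp p (A*p^(N+1)) k"
definition rr :: "'a::field \<Rightarrow> 'a \<Rightarrow> 'a \<Rightarrow> nat \<Rightarrow> 'a" where
  "rr p A c N = gp p (A*p) N * gp p (p/c) N / (gp p (A*p/c) N * gp p p N)"
definition rho :: "'a::field \<Rightarrow> 'a \<Rightarrow> 'a \<Rightarrow> nat \<Rightarrow> 'a" where
  "rho p A c N = (1-A*p^(N+1))*(c-p^(N+1))/((c-A*p^(N+1))*(1-p^(N+1)))"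
definition HH :: "'a::field \<Rightarrow> 'a \<Rightarrow> 'a \<Rightarrow> nat \<Rightarrow> nat \<Rightarrow> 'a" where
  "HH p A c N k = (case k of 0 \<Rightarrow> 0 | Suc m \<Rightarrow>
     rho p A c N * (p^(N+1)/(c - p^(N+1))) * (aa p A c m * Pn p N m / gp p (A*p^(N+1)) m)
      * ((1-A*p^m)^2*(1-c*p^m)/(1-A)) / (1 - A*p^(N+1)*p^m))"

lemma gp_Suc: "gp p a (Suc k) = gp p a k * (1 - a*p^k)"
  by (simp add: gp_def)
lemma gp_Suc_shift: "gp p a (Suc k) = (1 - a) * gp p (a*p) k"
  unfolding gp_def prod.lessThan_Suc_shift by (simp add: mult.assoc)
lemma Pn_Suc: "Pn p N (Suc k) = Pn p N k * (p^N - p^k)"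
  by (simp add: Pn_def)
lemma Pn_Suc_Suc: "Pn p (Suc N) (Suc k) = (p^Suc N - 1) * p^k * Pn p N k"
proof -
  have "Pn p (Suc N) (Suc k) = (p^Suc N - 1) * (\<Prod>j<k. p * (p^N - p^j))"
    unfolding Pn_def prod.lessThan_Suc_shift by (simp add: algebra_simps)
  also have "\<dots> = (p^Suc N - 1) * p^k * Pn p N k"
    by (simp add: Pn_def prod.distrib)
  finally show ?thesis .
qed
lemma aa_Suc:
  assumes "c \<noteq> 0" "gp p p m \<noteq> 0" "gp p (A*p/c) m \<noteq> 0" "1-p*p^m \<noteq> 0" "c-A*p*p^m \<noteq> 0"
  shows "aa p A c (Suc m) = aa p A c m * ((1-A*p^m)^2*(1-c*p^m)) * p / ((1-p*p^m)^2*(c-A*p*p^m))"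
proof -
  have e: "1 - A*p/c*p^m = (c - A*p*p^m)/c" using assms by (simp add: field_simps)
  have "aa p A c (Suc m) = aa p A c m * ((1-A*p^m)^2*(1-c*p^m) / ((1-p*p^m)^2*(1 - A*p/c*p^m)) * (p/c))"
    unfolding aa_def gp_Suc power_mult_distrib times_divide_times_eq power_Suc2
    by (simp add: ac_simps)
  also have "\<dots> = aa p A c m * ((1-A*p^m)^2*(1-c*p^m)) * p / ((1-p*p^m)^2*(c-A*p*p^m))"
    unfolding e using assms by (simp add: field_simps)
  finally show ?thesis .
qed

lemma key_poly:
  fixes X Y A c p :: "'a::comm_ring_1"
  shows "(1-A*p^2*X^2)*p*(p*Y-1)*X*((c-A*p*Y)*(1-p*Y)) - (c-p*Y)*(p*(1-A*p^2*X^2)*(Y-X))*(1-A*p*p*Y*X)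
    = p*Y*(p*(Y-X)*(1-A*p*X)^2*(1-c*p*X)) - p*Y*((1-p*X)^2*(c-A*p*X)*(1-A*p*p*Y*X))"
  by (simp add: algebra_simps power2_eq_square)

lemma fr1: fixes W N D e P z :: "'a::field"
  shows "z \<noteq> 0 \<Longrightarrow> N = e*P \<Longrightarrow> W*(N/D) = W*e/(D*z)*(P*z)"
  by (simp add: field_simps)
lemma fr2: fixes W N D D2 e g z d4 rh :: "'a::field"
  shows "rh = e*g/z \<Longrightarrow> D = D2*d4 \<Longrightarrow> d4 \<noteq> 0 \<Longrightarrow> rh*(W*(N/D2)) = W*e/(D*z)*(g*N*d4)"
  by (simp add: field_simps)
lemma fr3: fixes W N D e g z y rh :: "'a::field"
  shows "rh = e*g/z \<Longrightarrow> g \<noteq> 0 \<Longrightarrow> rh*(y/g)*(W*(N/D)) = W*e/(D*z)*(y*N)"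
  by (simp add: field_simps)
lemma fr4: fixes W D e g z y rh d3 D3 :: "'a::field"
  shows "rh = e*g/z \<Longrightarrow> g \<noteq> 0 \<Longrightarrow> D = D3*d3 \<Longrightarrow> d3 \<noteq> 0 \<Longrightarrow> D3 \<noteq> 0 \<Longrightarrow> rh*(y/g)*(W/d3) = W*e/(D*z)*(y*D3)"
  by (simp add: field_simps)

lemma key:
 fixes W X Y A c p :: "'a::field"
 assumes n1: "1-p*X \<noteq> 0" and n2: "c-A*p*X \<noteq> 0" and n3: "1-A*p*Y*X \<noteq> 0" and n4: "1-A*p*p*Y*X \<noteq> 0"
   and n5: "c-A*p*Y \<noteq> 0" and n6: "1-p*Y \<noteq> 0" and n7: "c-p*Y \<noteq> 0"
 defines "rh \<equiv> (1-A*p*Y)*(c-p*Y)/((c-A*p*Y)*(1-p*Y))"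
 shows "W*(p*(1-A*p^2*X^2)*(p*Y-1)*X*(1-A*p*Y)/((1-p*X)^2*(c-A*p*X)*(1-A*p*Y*X)*(1-A*p*p*Y*X)))
   - rh*(W*(p*(1-A*p^2*X^2)*(Y-X)/((1-p*X)^2*(c-A*p*X)*(1-A*p*Y*X))))
   = rh*(p*Y/(c-p*Y))*(W*(p*(Y-X)*(1-A*p*X)^2*(1-c*p*X)/((1-p*X)^2*(c-A*p*X)*(1-A*p*Y*X)*(1-A*p*p*Y*X))))
   - rh*(p*Y/(c-p*Y))*(W/(1-A*p*Y*X))"
proof -
  let ?D = "(1-p*X)^2*(c-A*p*X)*(1-A*p*Y*X)*(1-A*p*p*Y*X)"
  let ?z = "(c-A*p*Y)*(1-p*Y)"
  let ?e = "1-A*p*Y"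
  have z: "?z \<noteq> 0" using n5 n6 by simp
  have rh: "rh = ?e*(c-p*Y)/?z" unfolding rh_def ..
  have t1: "W*(p*(1-A*p^2*X^2)*(p*Y-1)*X*(1-A*p*Y)/?D) = W*?e/(?D*?z)*(((1-A*p^2*X^2)*p*(p*Y-1)*X)*?z)"
    by (rule fr1[OF z]) (simp add: algebra_simps)
  have t2: "rh*(W*(p*(1-A*p^2*X^2)*(Y-X)/((1-p*X)^2*(c-A*p*X)*(1-A*p*Y*X))))
     = W*?e/(?D*?z)*((c-p*Y)*(p*(1-A*p^2*X^2)*(Y-X))*(1-A*p*p*Y*X))"
    by (rule fr2[OF rh _ n4]) simp
  have t3: "rh*(p*Y/(c-p*Y))*(W*(p*(Y-X)*(1-A*p*X)^2*(1-c*p*X)/?D))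
     = W*?e/(?D*?z)*(p*Y*(p*(Y-X)*(1-A*p*X)^2*(1-c*p*X)))"
    by (rule fr3[OF rh n7])
  have t4: "rh*(p*Y/(c-p*Y))*(W/(1-A*p*Y*X)) = W*?e/(?D*?z)*(p*Y*((1-p*X)^2*(c-A*p*X)*(1-A*p*p*Y*X)))"
    by (rule fr4[OF rh n7 _ n3]) (use n1 n2 n4 in \<open>simp_all only: mult_eq_0_iff power_eq_0_iff mult_ac, auto\<close>)
  show ?thesis unfolding t1 t2 t3 t4 right_diff_distrib[symmetric] key_poly ..
qed

lemma gp_nz: assumes "\<And>j. j < k \<Longrightarrow> a*p^j \<noteq> 1" shows "gp p a k \<noteq> 0"
  unfolding gp_def using assms by (simp add: prod_zero_iff)

locale dg =
  fixes p A c :: "'a::field"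
  assumes hp: "p \<noteq> 0" and hc: "c \<noteq> 0" and hA: "A \<noteq> 1"
    and h1: "\<And>i. i \<ge> 1 \<Longrightarrow> p^i \<noteq> 1"
    and h2: "\<And>i. i \<ge> 1 \<Longrightarrow> A*p^i \<noteq> 1"
    and h3: "\<And>i. i \<ge> 1 \<Longrightarrow> A*p^i \<noteq> c"
    and h4: "\<And>i. i \<ge> 1 \<Longrightarrow> p^i \<noteq> c"
begin

lemma nz1: "1 - p*p^m \<noteq> 0" using h1[of "Suc m"] by simp
lemma nz2: "c - A*p*p^m \<noteq> 0" using h3[of "Suc m"] by (simp add: mult.assoc)
lemma nz3: "1 - A*p*p^N*p^m \<noteq> 0" using h2[of "Suc (N+m)"] by (simp add: power_add mult_ac)
lemma nz4: "1 - A*p*p*p^N*p^m \<noteq> 0" using h2[of "Suc (Suc (N+m))"] by (simp add: power_add mult_ac)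
lemma nz5: "c - A*p*p^N \<noteq> 0" using h3[of "Suc N"] by (simp add: mult_ac)
lemma nz6: "1 - p*p^N \<noteq> 0" using h1[of "Suc N"] by simp
lemma nz7: "c - p*p^N \<noteq> 0" using h4[of "Suc N"] by simp
lemma nz8: "1 - A*p*p^N \<noteq> 0" using h2[of "Suc N"] by (simp add: mult_ac)
lemma nzA: "1 - A \<noteq> 0" using hA by simp
lemma nzd: "gp p (A*p^(N+1)) m \<noteq> 0"
  by (rule gp_nz) (use h2[of "N+1+_"] in \<open>auto simp: power_add mult_ac\<close>)

lemma step:
  "ss p A c (Suc N) (Suc m) - rho p A c N * ss p A c N (Suc m)
     = HH p A c N (Suc (Suc m)) - HH p A c N (Suc m)"
proof -
  define X where "X = p^m"
  define Y where "Y = p^N"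
  define d where "d = gp p (A*p^(N+1)) m"
  define am where "am = aa p A c m"
  define P0 where "P0 = Pn p N m"
  define E where "E = am * P0 / d"
  define W where "W = E * ((1-A*X)^2*(1-c*X)/(1-A))"
  have n1: "1-p*X \<noteq> 0" and n2: "c-A*p*X \<noteq> 0" and n3: "1-A*p*Y*X \<noteq> 0"
    and n4: "1-A*p*p*Y*X \<noteq> 0" and n5: "c-A*p*Y \<noteq> 0" and n6: "1-p*Y \<noteq> 0"
    and n7: "c-p*Y \<noteq> 0" and n8: "1 - A*p*Y \<noteq> 0"
    unfolding X_def Y_def using nz1 nz2 nz3 nz4 nz5 nz6 nz7 nz8 by auto
  have nd: "d \<noteq> 0" unfolding d_def by (rule nzd)
  have gpp: "gp p p m \<noteq> 0" by (rule gp_nz) (use h1[of "Suc _"] in auto)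
  have gpB: "gp p (A*p/c) m \<noteq> 0"
  proof (rule gp_nz)
    fix j assume "j < m"
    have "A*p^(Suc j) \<noteq> c" by (rule h3) simp
    then show "A*p/c*p^j \<noteq> 1" using hc by (simp add: field_simps)
  qed
  have g1: "gp p (A*p^(N+1)) (Suc m) = d * (1-A*p*Y*X)"
    by (simp add: gp_Suc X_def Y_def d_def mult_ac)
  have g2: "gp p (A*p^(Suc N+1)) (Suc m) = d * (1-A*p*Y*X) * (1-A*p*p*Y*X) / (1-A*p*Y)"
  proof -
    have "gp p (A*p^(N+1)) (Suc (Suc m)) = (1 - A*p*Y) * gp p (A*p^(Suc N+1)) (Suc m)"
      by (subst gp_Suc_shift) (simp add: Y_def mult_ac)
    moreover have "gp p (A*p^(N+1)) (Suc (Suc m)) = d * (1-A*p*Y*X) * (1-A*p*p*Y*X)"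
      by (simp add: gp_Suc X_def Y_def d_def mult_ac)
    ultimately have "(1 - A*p*Y) * gp p (A*p^(Suc N+1)) (Suc m) = d * (1-A*p*Y*X) * (1-A*p*p*Y*X)"
      by simp
    then show ?thesis using n8 by (simp add: eq_divide_eq mult.commute)
  qed
  have a1: "aa p A c (Suc m) = am * ((1-A*X)^2*(1-c*X)) * p / ((1-p*X)^2*(c-A*p*X))"
    unfolding X_def am_def by (rule aa_Suc[OF hc gpp gpB nz1 nz2])
  have pn1: "Pn p N (Suc m) = P0 * (Y - X)" by (simp add: Pn_Suc P0_def X_def Y_def)
  have pn2: "Pn p (Suc N) (Suc m) = (p*Y - 1) * X * P0" by (simp add: Pn_Suc_Suc P0_def X_def Y_def)
  have pw: "p^(2*Suc m) = p^2*X^2" "p^Suc m = p*X" "p^(N+1) = p*Y"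
    by (simp_all add: X_def Y_def power_mult_distrib power_mult[symmetric] mult_ac)
       (simp add: power_mult power2_eq_square)
  have s1: "ss p A c N (Suc m) = W*(p*(1-A*p^2*X^2)*(Y-X)/((1-p*X)^2*(c-A*p*X)*(1-A*p*Y*X)))"
    unfolding ss_def unfolding a1 g1 pn1 unfolding pw W_def E_def
    using nd n1 n2 n3 nzA by (simp add: field_simps)
  have s2: "ss p A c (Suc N) (Suc m) = W*(p*(1-A*p^2*X^2)*(p*Y-1)*X*(1-A*p*Y)/((1-p*X)^2*(c-A*p*X)*(1-A*p*Y*X)*(1-A*p*p*Y*X)))"
    unfolding ss_def unfolding a1 g2 pn2 unfolding pw W_def E_def
    using nd n1 n2 n3 n4 n8 nzA by (simp add: field_simps)
  have h2: "HH p A c N (Suc (Suc m)) = rho p A c N*(p*Y/(c-p*Y))*(W*(p*(Y-X)*(1-A*p*X)^2*(1-c*p*X)/((1-p*X)^2*(c-A*p*X)*(1-A*p*Y*X)*(1-A*p*p*Y*X))))"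
    unfolding HH_def nat.case unfolding a1 g1 pn1 unfolding pw W_def E_def
    using nd n1 n2 n3 n4 nzA by (simp add: field_simps)
  have h1: "HH p A c N (Suc m) = rho p A c N*(p*Y/(c-p*Y))*(W/(1-A*p*Y*X))"
    unfolding HH_def nat.case W_def E_def am_def P0_def d_def unfolding pw X_def by (simp add: mult_ac)
  have rh: "rho p A c N = (1-A*p*Y)*(c-p*Y)/((c-A*p*Y)*(1-p*Y))"
    unfolding rho_def pw by (simp add: mult.assoc)
  show ?thesis unfolding s1 s2 h1 h2 rh
    by (rule key[OF n1 n2 n3 n4 n5 n6 n7])
qed

lemma step_all: "ss p A c (Suc N) k - rho p A c N * ss p A c N k = HH p A c N (Suc k) - HH p A c N k"
proof (cases k)
  case 0
  have n5: "c - A*p*p^N \<noteq> 0" and n6: "1 - p*p^N \<noteq> 0" and n7: "c - p*p^N \<noteq> 0"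
    and n8: "1 - A*p*p^N \<noteq> 0" using nz5 nz6 nz7 nz8 by auto
  define Z where "Z = p*p^N"
  have z: "c - A*Z \<noteq> 0" "1 - Z \<noteq> 0" "c - Z \<noteq> 0" "1 - A*Z \<noteq> 0"
    using n5 n6 n7 n8 by (simp_all add: Z_def mult.assoc)
  have zc: "1 - e*g/(h*k) = e*g/(h*k)*(Z/g)*W/e"
    if "e \<noteq> 0" "g \<noteq> 0" "h \<noteq> 0" "k \<noteq> 0" "h*k - e*g = Z*W" for e g h k W :: 'a
  proof -
    have "1 - e*g/(h*k) = (h*k - e*g)/(h*k)" using that(1-4) by (simp add: diff_divide_distrib)
    also have "\<dots> = Z*W/(h*k)" using that by simp
    also have "\<dots> = e*g/(h*k)*(Z/g)*W/e" using that(1-4) by (simp add: field_simps)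
    finally show ?thesis .
  qed
  have w: "(1-A)^2*(1-c)/(1-A) = (1-A)*(1-c)" using nzA by (simp add: power2_eq_square)
  have "1 - (1-A*Z)*(c-Z)/((c-A*Z)*(1-Z)) = (1-A*Z)*(c-Z)/((c-A*Z)*(1-Z)) * (Z/(c-Z)) * ((1-A)*(1-c)) / (1-A*Z)"
    by (rule zc) (use z in \<open>simp_all add: algebra_simps\<close>)
  moreover have "p^(N+1) = Z" by (simp add: Z_def)
  ultimately show ?thesis using 0 hA
    by (simp add: ss_def HH_def aa_def gp_def Pn_def rho_def mult.assoc w)
next
  case (Suc m) then show ?thesis using step by simp
qed

lemma ss_zero: "ss p A c N (Suc N) = 0"
  by (simp add: ss_def Pn_Suc)
lemma HH_zero: "HH p A c N (Suc (Suc N)) = 0"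
  by (simp add: HH_def Pn_Suc)

lemma rr_Suc: "rr p A c (Suc N) = rho p A c N * rr p A c N"
proof -
  have "rr p A c (Suc N) = rr p A c N * ((1 - A*p*p^N)*(1-p/c*p^N)/((1-A*p/c*p^N)*(1-p*p^N)))"
    unfolding rr_def gp_Suc by (simp add: ac_simps times_divide_times_eq)
  also have "(1 - A*p*p^N)*(1-p/c*p^N)/((1-A*p/c*p^N)*(1-p*p^N)) = rho p A c N"
  proof -
    have e: "(1-p/c*p^N) = (c - p*p^N)/c" "(1-A*p/c*p^N) = (c - A*p*p^N)/c" using hc by (simp_all add: field_simps)
    have f: "a*(x/c)/((y/c)*b) = a*x/(y*b)" for a x y b :: 'a using hc by (simp add: field_simps)
    show ?thesis unfolding rho_def e f by (simp add: mult.assoc)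
  qed
  finally show ?thesis by simp
qed

theorem dougall: "(\<Sum>k<Suc N. ss p A c N k) = rr p A c N"
proof (induction N)
  case 0
  then show ?case by (simp add: ss_def rr_def aa_def gp_def Pn_def hA)
next
  case (Suc N)
  have "(\<Sum>k<Suc (Suc N). ss p A c (Suc N) k)
      = (\<Sum>k<Suc (Suc N). rho p A c N * ss p A c N k + (HH p A c N (Suc k) - HH p A c N k))"
    by (rule sum.cong) (auto simp: step_all[symmetric])
  also have "\<dots> = rho p A c N * (\<Sum>k<Suc (Suc N). ss p A c N k) + (HH p A c N (Suc (Suc N)) - HH p A c N 0)"
    by (simp only: sum.distrib sum_distrib_left sum_lessThan_telescope)
  also have "\<dots> = rho p A c N * rr p A c N"
  proof -
    have h0: "HH p A c N 0 = 0" by (simp add: HH_def)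
    show ?thesis unfolding sum.lessThan_Suc[of _ "Suc N"] Suc.IH ss_zero HH_zero h0 by simp
  qed
  finally show ?case by (simp add: rr_Suc)
qed

end


definition zeta :: "nat \<Rightarrow> nat \<Rightarrow> complex" where
  "zeta n k = cis (2 * pi * real k / real n)"
definition Sn :: "nat \<Rightarrow> nat set" where
  "Sn n = {k. 1 \<le> k \<and> k \<le> n \<and> coprime k n}"

lemma cyc_eq: "cyclotomic n = (\<Prod>k\<in>Sn n. [:- zeta n k, 1:])"
  unfolding cyclotomic_def Sn_def zeta_def ..

lemma finite_Sn: "finite (Sn n)" unfolding Sn_def by auto

lemma cis_eq_1: "cis x = 1 \<longleftrightarrow> (\<exists>j::int. x = of_int j * 2 * pi)"
proof
  assume "cis x = 1"
  then have "cos x = 1" by (simp add: complex_eq_iff)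
  then show "\<exists>j::int. x = of_int j * 2 * pi" by (simp add: cos_one_2pi_int)
next
  assume "\<exists>j::int. x = of_int j * 2 * pi"
  then obtain j :: int where "x = of_int j * 2 * pi" by blast
  then show "cis x = 1" using cis_multiple_2pi[of "of_int j"] by (simp add: mult_ac)
qed

lemma zeta_pow_eq_1:
  assumes "k \<in> Sn n" "n > 0"
  shows "zeta n k ^ m = 1 \<longleftrightarrow> n dvd m"
proof -
  have cop: "coprime k n" using assms unfolding Sn_def by auto
  have "zeta n k ^ m = cis (2 * pi * real (m * k) / real n)"
    unfolding zeta_def DeMoivre by (simp add: field_simps)
  also have "\<dots> = 1 \<longleftrightarrow> (\<exists>j::int. 2 * pi * real (m * k) / real n = of_int j * 2 * pi)"
    by (rule cis_eq_1)
  also have "\<dots> \<longleftrightarrow> (\<exists>j::int. real_of_int (int (m * k)) = real_of_int (j * int n))"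
  proof -
    have "2 * pi * real (m * k) / real n = of_int j * 2 * pi \<longleftrightarrow> real (m * k) = real_of_int j * real n" for j :: int
      using assms(2) pi_gt_zero by (auto simp: field_simps)
    then show ?thesis by simp
  qed
  also have "\<dots> \<longleftrightarrow> (\<exists>j::int. int (m * k) = j * int n)"
    by (simp only: of_int_eq_iff)
  also have "\<dots> \<longleftrightarrow> int n dvd int (m * k)"
    by (auto simp: dvd_def mult.commute)
  also have "\<dots> \<longleftrightarrow> n dvd m * k" by (rule int_dvd_int_iff)
  also have "\<dots> \<longleftrightarrow> n dvd m"
    using cop by (simp add: coprime_commute coprime_dvd_mult_left_iff)
  finally show ?thesis .
qed

lemma zeta_inj:
  assumes "k \<in> Sn n" "k' \<in> Sn n" "zeta n k = zeta n k'"
  shows "k = k'"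
proof -
  have n: "n > 0" using assms unfolding Sn_def by auto
  have "cis (2 * pi * real k / real n - 2 * pi * real k' / real n) = 1"
    using assms(3) unfolding zeta_def by (simp add: cis_divide[symmetric])
  then obtain j :: int where j: "2 * pi * real k / real n - 2 * pi * real k' / real n = of_int j * 2 * pi"
    using cis_eq_1 by blast
  then have "2*pi*(real k / real n - real k' / real n) = 2*pi*of_int j" by (simp add: algebra_simps)
  then have "real k / real n - real k' / real n = of_int j" using pi_gt_zero by simp
  then have "real k - real k' = j * real n" using n by (simp add: field_simps)
  then have "int k - int k' = j * int n" by (metis of_int_eq_iff of_int_mult of_int_of_nat_eq of_int_diff)
  moreover have "\<bar>int k - int k'\<bar> < int n" using assms unfolding Sn_def by auto
  ultimately have "j = 0"
  proof (rule_tac ccontr)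
    assume a: "int k - int k' = j * int n" "\<bar>int k - int k'\<bar> < int n" "j \<noteq> 0"
    then have "1 \<le> \<bar>j\<bar>" by simp
    then have "1 * int n \<le> \<bar>j\<bar> * int n" by (rule mult_right_mono) simp
    then show False using a by (simp add: abs_mult)
  qed
  then show ?thesis using \<open>int k - int k' = j * int n\<close> by simp
qed

lemma zeta_nz: "zeta n k \<noteq> 0" unfolding zeta_def by simp

lemma coprime_cyc:
  assumes "\<And>k. k \<in> Sn n \<Longrightarrow> poly Q (zeta n k) \<noteq> 0"
  shows "coprime Q (cyclotomic n)"
  unfolding cyc_eq
proof (rule prod_coprime_right)
  fix k assume "k \<in> Sn n"
  have "\<not> [:- zeta n k, 1:] dvd Q" using assms[OF \<open>k \<in> Sn n\<close>] by (simp add: poly_eq_0_iff_dvd)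
  then have "coprime [:- zeta n k, 1:] Q"
    by (intro prime_elem_imp_coprime prime_elem_linear_field_poly) simp_all
  then show "coprime Q [:- zeta n k, 1:]" by (simp add: coprime_commute)
qed

lemma dvd_cyc:
  assumes "\<And>k. k \<in> Sn n \<Longrightarrow> poly Q (zeta n k) = 0"
  shows "cyclotomic n dvd Q"
proof -
  have "T \<subseteq> Sn n \<Longrightarrow> (\<Prod>k\<in>T. [:- zeta n k, 1:]) dvd Q" for T
  proof (induction T rule: infinite_finite_induct)
    case (infinite A) then show ?case using finite_Sn finite_subset by blast
  next
    case empty then show ?case by simp
  next
    case (insert x F)
    have "coprime [:- zeta n x, 1:] (\<Prod>k\<in>F. [:- zeta n k, 1:])"
    proof (rule prod_coprime_right)
      fix k assume k: "k \<in> F"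
      have "zeta n x \<noteq> zeta n k" using zeta_inj insert k by blast
      then have "\<not> [:- zeta n x, 1:] dvd [:- zeta n k, 1:]" by (simp add: poly_eq_0_iff_dvd[symmetric])
      then show "coprime [:- zeta n x, 1:] [:- zeta n k, 1:]"
        by (intro prime_elem_imp_coprime prime_elem_linear_field_poly) simp_all
    qed
    moreover have "[:- zeta n x, 1:] dvd Q" using assms insert by (simp add: poly_eq_0_iff_dvd[symmetric])
    ultimately have "[:- zeta n x, 1:] * (\<Prod>k\<in>F. [:- zeta n k, 1:]) dvd Q"
      using insert by (intro divides_mult) auto
    then show ?case using insert(1,2) by (simp add: prod.insert)
  qed
  then show ?thesis unfolding cyc_eq by simp
qed



definition integ :: "complex poly \<Rightarrow> ratfun \<Rightarrow> bool" where
  "integ P x \<longleftrightarrow> (\<exists>A B. B \<noteq> 0 \<and> coprime B P \<and> x = Fract A B)"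
definition unitp :: "complex poly \<Rightarrow> ratfun \<Rightarrow> bool" where
  "unitp P x \<longleftrightarrow> (\<exists>A B. A \<noteq> 0 \<and> B \<noteq> 0 \<and> coprime A P \<and> coprime B P \<and> x = Fract A B)"

lemma integ_Fract1: "integ P (Fract A 1)"
  unfolding integ_def by (intro exI[of _ A] exI[of _ 1]) simp
lemma integ_0: "integ P 0" using integ_Fract1[of P 0] by (simp add: fract_collapse)
lemma integ_1: "integ P 1" using integ_Fract1[of P 1] by (simp add: fract_collapse)

lemma integ_add: "integ P x \<Longrightarrow> integ P y \<Longrightarrow> integ P (x + y)"
  unfolding integ_def
  by (elim exE conjE, rename_tac A B C D, rule_tac x="A*D + C*B" in exI, rule_tac x="B*D" in exI) simp
lemma integ_mult: "integ P x \<Longrightarrow> integ P y \<Longrightarrow> integ P (x * y)"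
  unfolding integ_def
  by (elim exE conjE, rename_tac A B C D, rule_tac x="A*C" in exI, rule_tac x="B*D" in exI) simp
lemma integ_minus: "integ P x \<Longrightarrow> integ P (- x)"
  unfolding integ_def
  by (elim exE conjE, rename_tac A B, rule_tac x="-A" in exI, rule_tac x="B" in exI) simp
lemma integ_diff: "integ P x \<Longrightarrow> integ P y \<Longrightarrow> integ P (x - y)"
  using integ_add[of P x "-y"] integ_minus[of P y] by simp
lemma integ_sum: "(\<And>i. i \<in> I \<Longrightarrow> integ P (f i)) \<Longrightarrow> integ P (\<Sum>i\<in>I. f i)"
  by (induction I rule: infinite_finite_induct) (auto intro: integ_add integ_0)
lemma integ_prod: "(\<And>i. i \<in> I \<Longrightarrow> integ P (f i)) \<Longrightarrow> integ P (\<Prod>i\<in>I. f i)"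
  by (induction I rule: infinite_finite_induct) (auto intro: integ_mult integ_1)
lemma integ_power: "integ P x \<Longrightarrow> integ P (x ^ k)"
  by (induction k) (auto intro: integ_mult integ_1)

lemma cong0_integ: "cong0_ratfun x P \<Longrightarrow> integ P x"
  unfolding integ_def cong0_ratfun_def by blast
lemma cong0_0: "cong0_ratfun 0 P"
  unfolding cong0_ratfun_def by (intro exI[of _ 0] exI[of _ 1]) (simp add: fract_collapse)
lemma cong0_Fract1: "P dvd A \<Longrightarrow> cong0_ratfun (Fract A 1) P"
  unfolding cong0_ratfun_def by (intro exI[of _ A] exI[of _ 1]) simp
lemma cong0_add: "cong0_ratfun x P \<Longrightarrow> cong0_ratfun y P \<Longrightarrow> cong0_ratfun (x + y) P"
  unfolding cong0_ratfun_def
  by (elim exE conjE, rename_tac A B C D, rule_tac x="A*D + C*B" in exI, rule_tac x="B*D" in exI) simp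
lemma cong0_minus: "cong0_ratfun x P \<Longrightarrow> cong0_ratfun (- x) P"
  unfolding cong0_ratfun_def
  by (elim exE conjE, rename_tac A B, rule_tac x="-A" in exI, rule_tac x="B" in exI) simp
lemma cong0_diff: "cong0_ratfun x P \<Longrightarrow> cong0_ratfun y P \<Longrightarrow> cong0_ratfun (x - y) P"
  using cong0_add[of x P "-y"] cong0_minus[of y P] by simp
lemma cong0_mult_integ: "cong0_ratfun x P \<Longrightarrow> integ P y \<Longrightarrow> cong0_ratfun (x * y) P"
  unfolding cong0_ratfun_def integ_def
  by (elim exE conjE, rename_tac A B C D, rule_tac x="A*C" in exI, rule_tac x="B*D" in exI) simp
lemma cong0_mult_integ': "integ P y \<Longrightarrow> cong0_ratfun x P \<Longrightarrow> cong0_ratfun (y * x) P"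
  using cong0_mult_integ[of x P y] by (simp add: mult.commute)
lemma cong0_sum: "(\<And>i. i \<in> I \<Longrightarrow> cong0_ratfun (f i) P) \<Longrightarrow> cong0_ratfun (\<Sum>i\<in>I. f i) P"
  by (induction I rule: infinite_finite_induct) (auto intro: cong0_add cong0_0)
lemma cong0_mult_sq: "cong0_ratfun x P \<Longrightarrow> cong0_ratfun y P \<Longrightarrow> cong0_ratfun (x * y) (P^2)"
  unfolding cong0_ratfun_def
  by (elim exE conjE, rename_tac A B C D, rule_tac x="A*C" in exI, rule_tac x="B*D" in exI)
     (simp add: power2_eq_square mult_dvd_mono)
lemma integ_sq: "integ P x \<Longrightarrow> integ (P^2) x"
  unfolding integ_def by simp
lemma cong0_prod_one:
  assumes "finite I" "j \<in> I" "cong0_ratfun (f j) P" "\<And>i. i \<in> I \<Longrightarrow> integ P (f i)"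
  shows "cong0_ratfun (\<Prod>i\<in>I. f i) P"
proof -
  have "(\<Prod>i\<in>I. f i) = f j * (\<Prod>i\<in>I - {j}. f i)" using assms(1,2) by (rule prod.remove)
  then show ?thesis using assms by (auto intro!: cong0_mult_integ integ_prod)
qed

lemma unitp_integ: "unitp P x \<Longrightarrow> integ P x"
  unfolding unitp_def integ_def by blast
lemma unitp_nz: "unitp P x \<Longrightarrow> x \<noteq> 0"
  unfolding unitp_def by (auto simp: Zero_fract_def eq_fract)
lemma unitp_inverse: "unitp P x \<Longrightarrow> unitp P (inverse x)"
  unfolding unitp_def by (elim exE conjE, rename_tac A B, rule_tac x="B" in exI, rule_tac x="A" in exI) simp
lemma unitp_mult: "unitp P x \<Longrightarrow> unitp P y \<Longrightarrow> unitp P (x * y)"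
  unfolding unitp_def
  by (elim exE conjE, rename_tac A B C D, rule_tac x="A*C" in exI, rule_tac x="B*D" in exI) simp
lemma unitp_minus: "unitp P x \<Longrightarrow> unitp P (- x)"
  unfolding unitp_def
  by (elim exE conjE, rename_tac A B, rule_tac x="-A" in exI, rule_tac x="B" in exI) simp
lemma unitp_1: "unitp P 1"
  unfolding unitp_def by (intro exI[of _ 1] exI[of _ 1]) (simp add: fract_collapse)
lemma unitp_power: "unitp P x \<Longrightarrow> unitp P (x ^ k)"
  by (induction k) (auto intro: unitp_mult unitp_1)
lemma unitp_prod: "(\<And>i. i \<in> I \<Longrightarrow> unitp P (f i)) \<Longrightarrow> unitp P (\<Prod>i\<in>I. f i)"
  by (induction I rule: infinite_finite_induct) (auto intro: unitp_mult unitp_1)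
lemma unitp_sq: "unitp P x \<Longrightarrow> unitp (P^2) x"
  unfolding unitp_def by simp
lemma integ_divide: "integ P x \<Longrightarrow> unitp P y \<Longrightarrow> integ P (x / y)"
  by (simp add: divide_inverse integ_mult unitp_integ unitp_inverse)
lemma unitp_powi: "unitp P x \<Longrightarrow> unitp P (x powi m)"
  unfolding power_int_def by (auto intro: unitp_power unitp_inverse)

abbreviation Q :: "int \<Rightarrow> ratfun" where "Q m \<equiv> qvar powi m"

lemma qvar_pow: "qvar ^ k = Fract ([:0,1:]^k) 1"
  by (induction k) (simp_all add: qvar_def fract_collapse)
lemma qvar_nz: "qvar \<noteq> 0"
  unfolding qvar_def by (simp add: Zero_fract_def eq_fract)
lemma Q_nz: "Q m \<noteq> 0" using qvar_nz by simp
lemma Q_add: "Q (a + b) = Q a * Q b" using qvar_nz by (simp add: power_int_add)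
lemma Q_diff: "Q (a - b) = Q a / Q b" using qvar_nz by (simp add: power_int_diff)
lemma Q_minus: "Q (- a) = inverse (Q a)" by (simp add: power_int_minus)
lemma Q_mult_nat: "Q a ^ k = Q (a * int k)" by (simp add: power_int_mult)
lemma Q_nat: "qvar ^ k = Q (int k)" by simp
lemma Q_inv: "Q a * Q (- a) = 1" using Q_add[of a "-a"] by simp

lemma X_pow_ne_1: "k > 0 \<Longrightarrow> ([:0,1:]::complex poly)^k \<noteq> 1"
proof
  assume "k > 0" "([:0,1:]::complex poly)^k = 1"
  then have "degree (([:0,1:]::complex poly)^k) = 0" by simp
  then show False using \<open>k > 0\<close> by (simp add: degree_power_eq)
qed

lemma Q_ne_1: assumes "m \<noteq> 0" shows "Q m \<noteq> 1"
proof -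
  have pos: "Q (int k) \<noteq> 1" if "k > 0" for k
  proof -
    have "Q (int k) = Fract ([:0,1:]^k) 1" by (simp add: qvar_pow)
    moreover have "Fract ([:0,1:]^k) 1 \<noteq> (1::ratfun)"
      using X_pow_ne_1[OF that] by (simp add: One_fract_def eq_fract)
    ultimately show ?thesis by simp
  qed
  show ?thesis
  proof (cases "m > 0")
    case True then show ?thesis using pos[of "nat m"] by simp
  next
    case False
    then have "Q m = inverse (Q (int (nat (-m))))" using assms by (simp add: Q_minus[symmetric])
    moreover have "Q (int (nat (-m))) \<noteq> 1" using pos[of "nat (-m)"] False assms by simp
    ultimately show ?thesis by (metis inverse_1 inverse_inverse_eq)
  qed
qed

lemma Q_inj: assumes "Q a = Q b" shows "a = b"
proof -
  have "Q (a - b) = 1" unfolding Q_diff assms using Q_nz[of b] by simp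
  then show ?thesis using Q_ne_1[of "a - b"] by auto
qed

context
  fixes n :: nat
  assumes n1: "n > 1"
begin

lemma one_Sn: "1 \<in> Sn n" unfolding Sn_def using n1 by auto

lemma unitp_qvar: "unitp (cyclotomic n) qvar"
  unfolding unitp_def qvar_def
  by (intro exI[of _ "[:0,1:]"] exI[of _ 1] conjI coprime_cyc) (simp_all add: zeta_nz)

lemma unitp_Q: "unitp (cyclotomic n) (Q m)"
  by (rule unitp_powi[OF unitp_qvar])

lemma one_minus_qpow: "1 - qvar ^ k = Fract (1 - [:0,1:]^k) 1"
  by (simp add: qvar_pow One_fract_def)

lemma poly_XK: "poly (1 - ([:0,1:]::complex poly)^k) z = 1 - z^k" by (simp add: poly_power)

lemma unit_nat: assumes "\<not> n dvd k" shows "unitp (cyclotomic n) (1 - qvar ^ k)"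
proof -
  have nz: "poly (1 - [:0,1:]^k) (zeta n j) \<noteq> 0" if "j \<in> Sn n" for j
    using zeta_pow_eq_1[OF that] assms n1 by (simp add: poly_XK)
  have "1 - [:0,1:]^k \<noteq> (0::complex poly)"
  proof
    assume "1 - [:0,1:]^k = (0::complex poly)"
    then have "poly (1 - [:0,1:]^k) (zeta n 1) = 0" by simp
    with nz[OF one_Sn] show False by simp
  qed
  then show ?thesis unfolding one_minus_qpow unitp_def
    by (intro exI[of _ "1 - [:0,1:]^k"] exI[of _ 1] conjI coprime_cyc nz) simp_all
qed

lemma cong_nat: assumes "n dvd k" shows "cong0_ratfun (1 - qvar ^ k) (cyclotomic n)"
  unfolding one_minus_qpow
  by (rule cong0_Fract1, rule dvd_cyc) (use zeta_pow_eq_1 assms n1 in \<open>simp add: poly_XK\<close>)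

lemma neg_split: "1 - Q m = - Q m * (1 - Q (- m))"
  by (simp add: algebra_simps Q_inv)

lemma unit_int: assumes "\<not> int n dvd m" shows "unitp (cyclotomic n) (1 - Q m)"
proof (cases "m \<ge> 0")
  case True
  then obtain k where k: "m = int k" using nonneg_int_cases by blast
  then have "\<not> n dvd k" using assms by simp
  then show ?thesis using unit_nat k by simp
next
  case False
  define k where "k = nat (-m)"
  have k: "m = - int k" using False by (simp add: k_def)
  then have "\<not> n dvd k" using assms by simp
  then have "unitp (cyclotomic n) (1 - Q (-m))" using unit_nat k by simp
  then show ?thesis unfolding neg_split[of m] by (intro unitp_mult unitp_minus unitp_Q)
qed

lemma cong_int: assumes "int n dvd m" shows "cong0_ratfun (1 - Q m) (cyclotomic n)"
proof (cases "m \<ge> 0")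
  case True
  then obtain k where k: "m = int k" using nonneg_int_cases by blast
  then have "n dvd k" using assms by simp
  then show ?thesis using cong_nat k by simp
next
  case False
  define k where "k = nat (-m)"
  have k: "m = - int k" using False by (simp add: k_def)
  then have "n dvd k" using assms by simp
  then have "cong0_ratfun (1 - Q (-m)) (cyclotomic n)" using cong_nat k by simp
  then show ?thesis unfolding neg_split[of m]
    by (intro cong0_mult_integ' integ_minus unitp_integ unitp_Q)
qed

end


definition xx :: "int \<Rightarrow> nat \<Rightarrow> ratfun" where "xx r j = Q r * (qvar^4)^j"
definition yy :: "nat \<Rightarrow> ratfun" where "yy j = qvar^4 * (qvar^4)^j"
definition numf :: "int \<Rightarrow> ratfun \<Rightarrow> nat \<Rightarrow> ratfun" where
  "numf r s k = (\<Prod>j<k. (1 + xx r j ^ 2 - xx r j * s) * (1 - xx r j)^2)"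
definition denf :: "ratfun \<Rightarrow> nat \<Rightarrow> ratfun" where
  "denf s k = (\<Prod>j<k. (1 + yy j ^ 2 - yy j * s) * (1 - yy j)^2)"
definition Tf :: "int \<Rightarrow> ratfun \<Rightarrow> nat \<Rightarrow> ratfun" where
  "Tf r s k = qint (8 * int k + r) * numf r s k / denf s k * Q ((4 - 2 * r) * int k)"

lemma sq4: "(1 + x^2 - x*2) * (1 - x)^2 = (1 - x)^4" for x :: ratfun
  by (simp add: algebra_simps power2_eq_square power4_eq_xxxx)

lemma Tf_2: "Tf r 2 k = qint (8 * int k + r)
        * (qpoch (qvar powi r) (qvar ^ 4) k) ^ 4 / (qpoch (qvar ^ 4) (qvar ^ 4) k) ^ 4
        * qvar powi ((4 - 2 * r) * int k)"
proof -
  have "numf r 2 k = (qpoch (qvar powi r) (qvar ^ 4) k) ^ 4"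
    unfolding numf_def qpoch_def prod_power_distrib[symmetric] xx_def sq4 ..
  moreover have "denf 2 k = (qpoch (qvar ^ 4) (qvar ^ 4) k) ^ 4"
    unfolding denf_def qpoch_def prod_power_distrib[symmetric] yy_def sq4 ..
  ultimately show ?thesis unfolding Tf_def by simp
qed

lemma pj: "(qvar^4)^j = Q (4 * int j)"
  by (simp add: Q_mult_nat[symmetric] power_mult)


lemma assemble:
  fixes q e Gc V Pn GA GD GB Gp Z W :: "'a::field"
  assumes "Z * V = W"
  shows "q * e * (Gc * (V * Pn) * GA^2) / (GD * GB * Gp^2) * Z = q * (e * (GA^2 * Gc / (Gp^2 * GB) * W) * Pn / GD)"
  unfolding assms[symmetric] by (simp add: divide_inverse inverse_mult_distrib mult_ac)

lemma num_factor:
  fixes a w P :: "'a::field"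
  assumes "a \<noteq> 0" "w \<noteq> 0"
  shows "(1 + (a*P)^2 - a*P*(w + inverse w)) * (1 - a*P)^2 = (1 - (a*w)*P) * (a/w * (w/a - P)) * (1 - a*P)^2"
  using assms by (simp add: field_simps power2_eq_square)

lemma den_factor:
  fixes w p P :: "'a::field"
  assumes "w \<noteq> 0"
  shows "(1 + (p*P)^2 - p*P*(w + inverse w)) * (1 - p*P)^2 = (1 - (w*p)*P) * (1 - (p/w)*P) * (1 - p*P)^2"
  using assms by (simp add: field_simps power2_eq_square)

locale mctx =
  fixes r :: int and nn N :: nat
  assumes r_odd: "odd r" and nn1: "nn > 1" and nn_odd: "odd nn"
    and nmod: "int nn mod 4 = (- r) mod 4"
    and nge: "int nn \<ge> max r (4 - r)"
    and Ndef: "4 * int N = 3 * int nn - r"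
begin

abbreviation "a \<equiv> Q r"
abbreviation "w \<equiv> Q (3 * int nn)"
abbreviation "c \<equiv> Q (r + 3 * int nn)"
abbreviation "pp \<equiv> (qvar^4 :: ratfun)"

lemma pN: "pp^N = w / a"
proof -
  have "pp^N = Q (4 * int N)" by (rule pj)
  also have "\<dots> = Q (3 * int nn - r)" using Ndef by simp
  also have "\<dots> = w / a" by (rule Q_diff)
  finally show ?thesis .
qed
lemma c_eq: "c = a * w" by (rule Q_add)
lemma a_nz: "a \<noteq> 0" by (rule Q_nz)
lemma w_nz: "w \<noteq> 0" by (rule Q_nz)
lemma r_nz: "r \<noteq> 0" using r_odd by auto
lemma a_ne1: "a \<noteq> 1" using Q_ne_1 r_nz by blast

lemma dg_inst: "dg pp a c"
proof
  show "pp \<noteq> 0" using qvar_nz by simp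
  show "c \<noteq> 0" by (rule Q_nz)
  show "a \<noteq> 1" by (rule a_ne1)
  fix i :: nat assume i: "1 \<le> i"
  show "pp^i \<noteq> 1" unfolding pj using Q_ne_1 i by simp
  show "a * pp^i \<noteq> 1" unfolding pj Q_add[symmetric] using Q_ne_1 i r_odd
    by (metis add.commute add_cancel_right_right even_add even_mult_iff even_numeral)
  show "a * pp^i \<noteq> c"
  proof
    assume "a * pp^i = c"
    then have "r + 4 * int i = r + 3 * int nn" unfolding pj Q_add[symmetric] by (rule Q_inj)
    then show False using nn_odd by presburger
  qed
  show "pp^i \<noteq> c"
  proof
    assume "pp^i = c"
    then have "4 * int i = r + 3 * int nn" unfolding pj by (rule Q_inj)
    then show False using nmod r_odd by presburger
  qed
qed

interpretation D: dg pp a c by (rule dg_inst)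

lemma qint_split: "qint (8 * int k + r) = qint r * ((1 - a * pp^(2*k)) / (1 - a))"
proof -
  have q1: "1 - qvar \<noteq> 0" using Q_ne_1[of 1] by simp
  have a1: "1 - a \<noteq> 0" using a_ne1 by simp
  have "a * pp^(2*k) = Q (8 * int k + r)" unfolding pj Q_add[symmetric] by (simp add: algebra_simps)
  have g: "b \<noteq> 0 \<Longrightarrow> (b/dd) * (x/b) = x/dd" for b dd x :: ratfun by simp
  show ?thesis unfolding qint_def g[OF a1] \<open>a * pp^(2*k) = Q (8 * int k + r)\<close> ..
qed

lemma Z_eq: "Q ((4 - 2 * r) * int k) * (a / w) ^ k = (pp / c) ^ k"
proof -
  have "Q (4 - 2 * r) * (a / w) = pp / c"
  proof -
    have "Q (4 - 2*r) * a * a = pp" unfolding Q_add[symmetric] by simp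
    then show ?thesis unfolding c_eq using a_nz w_nz by (simp add: field_simps)
  qed
  then have "(Q (4 - 2 * r) * (a / w)) ^ k = (pp / c) ^ k" by simp
  moreover have "Q ((4 - 2*r) * int k) = Q (4-2*r) ^ k" by (simp add: Q_mult_nat)
  ultimately show ?thesis by (simp only: power_mult_distrib)
qed

lemma numf_s0: "numf r (w + inverse w) k = gp pp c k * ((a/w)^k * Pn pp N k) * gp pp a k ^ 2"
proof -
  have "numf r (w + inverse w) k = (\<Prod>j<k. (1 - c * pp^j) * (a/w * (pp^N - pp^j)) * (1 - a * pp^j)^2)"
    unfolding numf_def
  proof (rule prod.cong[OF refl])
    fix j
    show "(1 + xx r j ^ 2 - xx r j * (w + inverse w)) * (1 - xx r j)^2 = (1 - c * pp^j) * (a/w * (pp^N - pp^j)) * (1 - a * pp^j)^2"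
      unfolding xx_def c_eq pN by (rule num_factor[OF a_nz w_nz])
  qed
  also have "\<dots> = gp pp c k * ((a/w)^k * Pn pp N k) * gp pp a k ^ 2"
    unfolding gp_def Pn_def prod.distrib prod_power_distrib by simp
  finally show ?thesis .
qed

lemma denf_s0: "denf (w + inverse w) k = gp pp (a * pp^(N+1)) k * gp pp (a * pp / c) k * gp pp pp k ^ 2"
proof -
  have e1: "a * pp^(N+1) = w * pp" using a_nz by (simp add: pN)
  have e2: "a * pp / c = pp / w" unfolding c_eq using a_nz by simp
  have "denf (w + inverse w) k = (\<Prod>j<k. (1 - (a * pp^(N+1)) * pp^j) * (1 - (a * pp / c) * pp^j) * (1 - pp * pp^j)^2)"
    unfolding denf_def e1 e2
  proof (rule prod.cong[OF refl])
    fix j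
    show "(1 + yy j ^ 2 - yy j * (w + inverse w)) * (1 - yy j)^2 = (1 - (w * pp) * pp^j) * (1 - (pp / w) * pp^j) * (1 - pp * pp^j)^2"
      unfolding yy_def by (rule den_factor[OF w_nz])
  qed
  also have "\<dots> = gp pp (a * pp^(N+1)) k * gp pp (a * pp / c) k * gp pp pp k ^ 2"
    unfolding gp_def prod.distrib prod_power_distrib by simp
  finally show ?thesis .
qed

lemma Tf_s0: "Tf r (w + inverse w) k = qint r * ss pp a c N k"
  unfolding Tf_def numf_s0 denf_s0 qint_split ss_def aa_def
  by (rule assemble[OF Z_eq])

lemma nd4:
  assumes "0 < t" "t < nn"
  shows "\<not> int nn dvd (4 * int t + int nn * e)"
proof
  assume "int nn dvd (4 * int t + int nn * e)"
  then have "int nn dvd 4 * int t" by (simp add: dvd_add_left_iff)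
  moreover have "coprime (int nn) 4"
  proof -
    have "coprime (int nn) 2" using nn_odd by simp
    then have "coprime (int nn) (2^2)" using coprime_power_right_iff by blast
    then show ?thesis by simp
  qed
  ultimately have "int nn dvd int t" by (simp add: coprime_dvd_mult_right_iff)
  then have "nn dvd t" by simp
  then show False using assms by (auto dest: dvd_imp_le)
qed

abbreviation "Phi \<equiv> cyclotomic nn"

lemma integ_Q: "integ Phi (Q m)" by (rule unitp_integ[OF unitp_Q[OF nn1]])
lemma integ_pp: "integ Phi (pp ^ j)" unfolding pj by (rule integ_Q)
lemma integ_pp1: "integ Phi pp" using integ_pp[of 1] by simp
lemma integ_1mQ: "integ Phi (1 - Q m)" by (rule integ_diff[OF integ_1 integ_Q])

lemma integ_qint: "integ Phi (qint m)"
proof -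
  have "unitp Phi (1 - Q 1)" by (rule unit_int[OF nn1]) (use nn1 in \<open>simp add: zdvd_imp_le\<close>)
  then show ?thesis unfolding qint_def using integ_1mQ by (simp add: integ_divide)
qed

lemma unit_gp:
  assumes "\<And>j. j < k \<Longrightarrow> \<not> int nn dvd e j" "\<And>j. b * pp^j = Q (e j)"
  shows "unitp Phi (gp pp b k)"
  unfolding gp_def by (rule unitp_prod) (simp add: assms unit_int[OF nn1])

lemma unit_den2: "k < nn \<Longrightarrow> unitp Phi (denf 2 k)"
proof -
  assume k: "k < nn"
  have "denf 2 k = gp pp pp k ^ 4"
    unfolding denf_def gp_def prod_power_distrib[symmetric] yy_def sq4 ..
  moreover have "unitp Phi (gp pp pp k)"
  proof (rule unit_gp)
    fix j assume "j < k"
    then show "\<not> int nn dvd (4 * int (j+1))" using nd4[of "j+1" 0] k by simp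
  next
    fix j show "pp * pp ^ j = Q (4 * int (j+1))" using pj[of "Suc j"] by simp
  qed
  ultimately show ?thesis by (simp add: unitp_power)
qed

lemma e1: "a * pp^(N+1) = w * pp" using a_nz by (simp add: pN)
lemma e2: "a * pp / c = pp / w" unfolding c_eq using a_nz by simp

lemma unit_gpD: "k \<le> nn - 1 \<Longrightarrow> unitp Phi (gp pp (a * pp^(N+1)) k)"
  unfolding e1
proof (rule unit_gp)
  fix j assume "j < k" "k \<le> nn - 1"
  then show "\<not> int nn dvd (4 * int (j+1) + 3 * int nn)" using nd4[of "j+1" 3] by (simp add: mult.commute)
next
  fix j
  have h: "pp * pp^j = Q (4 * int (j+1))" using pj[of "Suc j"] by simp
  have "w * pp * pp ^ j = w * (pp * pp^j)" by (simp add: mult.assoc)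
  also have "\<dots> = Q (3 * int nn + 4 * int (j+1))" unfolding h Q_add ..
  finally show "w * pp * pp ^ j = Q (4 * int (j+1) + 3 * int nn)" by (simp add: add.commute)
qed

lemma unit_gpB: "k \<le> nn - 1 \<Longrightarrow> unitp Phi (gp pp (a * pp / c) k)"
  unfolding e2
proof (rule unit_gp)
  fix j assume "j < k" "k \<le> nn - 1"
  then show "\<not> int nn dvd (4 * int (j+1) - 3 * int nn)" using nd4[of "j+1" "-3"] by (simp add: mult.commute)
next
  fix j
  have h: "pp * pp^j = Q (4 * int (j+1))" using pj[of "Suc j"] by simp
  have "pp / w * pp ^ j = (pp * pp^j) / w" by simp
  also have "\<dots> = Q (4 * int (j+1) - 3 * int nn)" unfolding h Q_diff ..
  finally show "pp / w * pp ^ j = Q (4 * int (j+1) - 3 * int nn)" .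
qed

lemma unit_gpp: "k \<le> nn - 1 \<Longrightarrow> unitp Phi (gp pp pp k)"
proof (rule unit_gp)
  fix j assume "j < k" "k \<le> nn - 1"
  then show "\<not> int nn dvd (4 * int (j+1))" using nd4[of "j+1" 0] by simp
next
  fix j show "pp * pp ^ j = Q (4 * int (j+1))" using pj[of "Suc j"] by simp
qed

lemma unit_den0: "k < nn \<Longrightarrow> unitp Phi (denf (w + inverse w) k)"
  unfolding denf_s0 using unit_gpD unit_gpB unit_gpp by (auto intro!: unitp_mult unitp_power)

lemma prod_pert:
  fixes k :: nat and u :: ratfun and al be :: "nat \<Rightarrow> ratfun"
  assumes "\<And>j. j < k \<Longrightarrow> integ M (al j)" "\<And>j. j < k \<Longrightarrow> integ M (be j)" "cong0_ratfun u M"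
  shows "cong0_ratfun ((\<Prod>j<k. al j - be j * u) - (\<Prod>j<k. al j)) M"
  using assms(1,2)
proof (induction k)
  case 0 then show ?case by (simp add: cong0_0)
next
  case (Suc k)
  have iu: "integ M u" by (rule cong0_integ[OF assms(3)])
  have ip: "integ M (\<Prod>j<k. al j - be j * u)"
    by (rule integ_prod) (use Suc.prems iu in \<open>auto intro!: integ_diff integ_mult\<close>)
  have "(\<Prod>j<Suc k. al j - be j * u) - (\<Prod>j<Suc k. al j)
     = ((\<Prod>j<k. al j - be j * u) - (\<Prod>j<k. al j)) * al k - ((\<Prod>j<k. al j - be j * u) * be k) * u"
    by (simp add: algebra_simps)
  moreover have "cong0_ratfun (((\<Prod>j<k. al j - be j * u) - (\<Prod>j<k. al j)) * al k) M"
    by (rule cong0_mult_integ) (use Suc in auto)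
  moreover have "cong0_ratfun (((\<Prod>j<k. al j - be j * u) * be k) * u) M"
    by (rule cong0_mult_integ'[OF _ assms(3)]) (use Suc ip in \<open>auto intro: integ_mult\<close>)
  ultimately show ?case by (simp add: cong0_diff)
qed

lemma quot_cong:
  assumes "unitp M D1" "unitp M D2" "integ M N2" "cong0_ratfun (N1 - N2) M" "cong0_ratfun (D1 - D2) M"
  shows "cong0_ratfun (N1/D1 - N2/D2) M"
proof -
  have d: "D1 \<noteq> 0" "D2 \<noteq> 0" using assms(1,2) unitp_nz by auto
  have "N1/D1 - N2/D2 = ((N1 - N2) * D2 - N2 * (D1 - D2)) * inverse (D1 * D2)"
    using d by (simp add: field_simps)
  moreover have "cong0_ratfun ((N1 - N2) * D2 - N2 * (D1 - D2)) M"
    by (rule cong0_diff[OF cong0_mult_integ[OF assms(4) unitp_integ[OF assms(2)]] cong0_mult_integ'[OF assms(3) assms(5)]])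
  moreover have "integ M (inverse (D1 * D2))"
    using assms by (intro unitp_integ unitp_inverse unitp_mult)
  ultimately show ?thesis by (simp add: cong0_mult_integ)
qed

definition "uu = inverse w * (1 - w)^2"

lemma s0_eq: "w + inverse w = 2 + uu"
  unfolding uu_def using w_nz by (simp add: field_simps power2_eq_square)

lemma cong_uu: "cong0_ratfun uu (Phi^2)"
proof -
  have h: "cong0_ratfun (1 - w) Phi" using cong_int[OF nn1, of "3 * int nn"] by simp
  have "cong0_ratfun ((1 - w) * (1 - w)) (Phi^2)" by (rule cong0_mult_sq[OF h h])
  moreover have "integ (Phi^2) (inverse w)" by (intro integ_sq unitp_integ unitp_inverse unitp_Q nn1)
  ultimately show ?thesis unfolding uu_def power2_eq_square[of "1-w"] by (simp add: cong0_mult_integ')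
qed

lemma integ_sq_iff: "integ (P^2) x = integ P x" unfolding integ_def by simp
lemma integ_2: "integ P 2" using integ_add[OF integ_1 integ_1, of P] by (simp add: one_add_one)

lemma integ_xx: "integ Phi (xx r j)" unfolding xx_def by (intro integ_mult integ_Q integ_pp)
lemma integ_yy: "integ Phi (yy j)" unfolding yy_def by (intro integ_mult integ_pp1 integ_pp)

lemma num_pert: "cong0_ratfun (numf r (2 + uu) k - numf r 2 k) (Phi^2)"
proof -
  have "numf r (2 + uu) k = (\<Prod>j<k. (1 + xx r j ^ 2 - xx r j * 2) * (1 - xx r j)^2 - (xx r j * (1 - xx r j)^2) * uu)"
    unfolding numf_def by (rule prod.cong) (simp_all add: algebra_simps)
  moreover have "numf r 2 k = (\<Prod>j<k. (1 + xx r j ^ 2 - xx r j * 2) * (1 - xx r j)^2)"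
    unfolding numf_def ..
  ultimately show ?thesis
    by (simp only:) (rule prod_pert[OF _ _ cong_uu], unfold integ_sq_iff, (intro integ_mult integ_diff integ_add integ_power integ_1 integ_2 integ_xx)+)
qed

lemma integ_yy_stuff: "integ Phi (1 - yy j)" by (intro integ_diff integ_1 integ_yy)

lemma den_pert: "cong0_ratfun (denf (2 + uu) k - denf 2 k) (Phi^2)"
proof -
  have "denf (2 + uu) k = (\<Prod>j<k. (1 + yy j ^ 2 - yy j * 2) * (1 - yy j)^2 - (yy j * (1 - yy j)^2) * uu)"
    unfolding denf_def by (rule prod.cong) (simp_all add: algebra_simps)
  moreover have "denf 2 k = (\<Prod>j<k. (1 + yy j ^ 2 - yy j * 2) * (1 - yy j)^2)"
    unfolding denf_def ..
  ultimately show ?thesis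
    by (simp only:) (rule prod_pert[OF _ _ cong_uu], unfold integ_sq_iff, (intro integ_mult integ_diff integ_add integ_power integ_1 integ_2 integ_yy)+)
qed

lemma integ_numf: "integ Phi (numf r s k)" if "integ Phi s"
  unfolding numf_def using that
  by (intro integ_prod integ_mult integ_diff integ_add integ_power integ_1 integ_xx) auto

lemma Tf_cong: "k < nn \<Longrightarrow> cong0_ratfun (Tf r 2 k - Tf r (w + inverse w) k) (Phi^2)"
proof -
  assume k: "k < nn"
  define q where "q = qint (8 * int k + r) * Q ((4 - 2 * r) * int k)"
  have "Tf r 2 k - Tf r (w + inverse w) k = - (q * (numf r (2+uu) k / denf (2+uu) k - numf r 2 k / denf 2 k))"
    unfolding Tf_def q_def s0_eq by (simp add: algebra_simps)
  moreover have "cong0_ratfun (numf r (2+uu) k / denf (2+uu) k - numf r 2 k / denf 2 k) (Phi^2)"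
  proof (rule quot_cong)
    show "unitp (Phi^2) (denf (2+uu) k)" using unit_den0[OF k] unfolding s0_eq by (rule unitp_sq)
    show "unitp (Phi^2) (denf 2 k)" using unit_den2[OF k] by (rule unitp_sq)
    show "integ (Phi^2) (numf r 2 k)" unfolding integ_sq_iff by (intro integ_numf integ_2)
    show "cong0_ratfun (numf r (2 + uu) k - numf r 2 k) (Phi^2)" by (rule num_pert)
    show "cong0_ratfun (denf (2 + uu) k - denf 2 k) (Phi^2)" by (rule den_pert)
  qed
  moreover have "integ (Phi^2) q" unfolding q_def integ_sq_iff by (intro integ_mult integ_qint integ_Q)
  ultimately show ?thesis by (simp add: cong0_minus cong0_mult_integ')
qed

lemma N_lt: "N < nn" using Ndef nge by simp
lemma N_ge1: "N \<ge> 1" using Ndef nge nn1 by simp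

lemma ss_vanish: "N < k \<Longrightarrow> ss pp a c N k = 0"
  unfolding ss_def Pn_def using prod_zero_iff[of "{..<k}" "\<lambda>j. pp^N - pp^j"] by auto

lemma sum_ss: "(\<Sum>k<nn. ss pp a c N k) = rr pp a c N"
proof -
  have "(\<Sum>k<nn. ss pp a c N k) = (\<Sum>k<Suc N. ss pp a c N k)"
    by (rule sum.mono_neutral_right) (use N_lt ss_vanish in auto)
  also have "\<dots> = rr pp a c N" by (rule D.dougall)
  finally show ?thesis .
qed

lemma integ_1m: "integ Phi x \<Longrightarrow> integ Phi (1 - x)" by (intro integ_diff integ_1)

lemma rr_cong: "cong0_ratfun (rr pp a c N) (Phi^2)"
proof -
  obtain j1 :: nat where j1: "4 * int j1 = int nn + r - 4"
  proof -
    have "(int nn + r - 4) mod 4 = 0" using nmod by presburger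
    moreover have "int nn + r - 4 \<ge> 0" using nge by simp
    ultimately have h1: "4 * ((int nn + r - 4) div 4) = int nn + r - 4" "(int nn + r - 4) div 4 \<ge> 0"
      by presburger+
    then have "4 * int (nat ((int nn + r - 4) div 4)) = int nn + r - 4" by simp
    then show ?thesis by (rule that)
  qed
  have j1N: "j1 < N" using j1 Ndef nge by simp
  have X1: "cong0_ratfun (gp pp (a*pp) N) Phi"
    unfolding gp_def
  proof (rule cong0_prod_one[of _ "N - 1"])
    show "N - 1 \<in> {..<N}" using N_ge1 by simp
    have "a * pp * pp^(N-1) = a * pp^N" using N_ge1 by (simp add: mult.assoc power_Suc[symmetric])
    also have "\<dots> = w" using a_nz by (simp add: pN)
    finally show "cong0_ratfun (1 - a * pp * pp ^ (N - 1)) Phi"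
      using cong_int[OF nn1, of "3 * int nn"] by simp
  qed (auto intro!: integ_1m integ_mult integ_Q integ_pp integ_pp1)
  have X2: "cong0_ratfun (gp pp (pp/c) N) Phi"
    unfolding gp_def
  proof (rule cong0_prod_one[of _ j1])
    show "j1 \<in> {..<N}" using j1N by simp
    have "pp / c * pp^j1 = (pp * pp^j1) / c" by simp
    also have "\<dots> = Q (4 * int (j1 + 1) - (r + 3 * int nn))" unfolding Q_diff using pj[of "Suc j1"] by simp
    also have "\<dots> = Q (int nn * (-2))" using j1 by (simp add: algebra_simps)
    finally show "cong0_ratfun (1 - pp / c * pp ^ j1) Phi"
      using cong_int[OF nn1, of "int nn * (-2)"] by simp
  qed (auto intro!: integ_1m integ_mult integ_Q integ_pp integ_divide unitp_Q nn1 integ_pp1)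
  have U: "unitp Phi (gp pp (a * pp / c) N * gp pp pp N)"
    using N_lt by (intro unitp_mult unit_gpB unit_gpp) auto
  have "rr pp a c N = (gp pp (a*pp) N * gp pp (pp/c) N) * inverse (gp pp (a * pp / c) N * gp pp pp N)"
    unfolding rr_def by (simp add: divide_inverse)
  moreover have "cong0_ratfun (gp pp (a*pp) N * gp pp (pp/c) N) (Phi^2)" by (rule cong0_mult_sq[OF X1 X2])
  moreover have "integ (Phi^2) (inverse (gp pp (a * pp / c) N * gp pp pp N))"
    unfolding integ_sq_iff by (intro unitp_integ unitp_inverse U)
  ultimately show ?thesis by (simp add: cong0_mult_integ)
qed

lemma main_cong: "cong0_ratfun (\<Sum>k<nn. Tf r 2 k) (Phi^2)"
proof -
  have "(\<Sum>k<nn. Tf r 2 k) = (\<Sum>k<nn. Tf r 2 k - Tf r (w + inverse w) k) + qint r * rr pp a c N"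
    by (simp add: Tf_s0 sum_ss[symmetric] sum_distrib_left sum.distrib[symmetric])
  moreover have "cong0_ratfun (\<Sum>k<nn. Tf r 2 k - Tf r (w + inverse w) k) (Phi^2)"
    by (rule cong0_sum) (simp add: Tf_cong)
  moreover have "cong0_ratfun (qint r * rr pp a c N) (Phi^2)"
    by (rule cong0_mult_integ'[OF _ rr_cong]) (simp add: integ_sq_iff integ_qint)
  ultimately show ?thesis by (simp add: cong0_add)
qed

end

theorem theorem5:
  fixes r n :: int
  assumes "odd r" and "n > 1" and "odd n"
    and "n mod 4 = (- r) mod 4"
    and "n \<ge> max r (4 - r)"
  shows "cong0_ratfun
    (\<Sum>k<nat n. qint (8 * int k + r)
        * (qpoch (qvar powi r) (qvar ^ 4) k) ^ 4 / (qpoch (qvar ^ 4) (qvar ^ 4) k) ^ 4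
        * qvar powi ((4 - 2 * r) * int k))
    ((cyclotomic (nat n))\<^sup>2)"
proof -
  define nn where "nn = nat n"
  have nnn: "int nn = n" using assms(2) by (simp add: nn_def)
  define N where "N = nat ((3 * n - r) div 4)"
  have h0: "(3 * n - r) mod 4 = 0" using assms(4) by presburger
  have h1: "4 * ((3 * n - r) div 4) = 3 * n - r" using h0 by presburger
  have h2: "(3 * n - r) div 4 \<ge> 0" using assms(2,5) by (simp add: pos_imp_zdiv_nonneg_iff)
  have Ndef: "4 * int N = 3 * int nn - r" unfolding N_def nnn using h1 h2 by simp
  have "odd (int nn)" using assms(3) nnn by simp
  then have oddnn: "odd nn" by simp
  have nn1: "nn > 1" using assms(2) nnn by simp
  have mm: "int nn mod 4 = (- r) mod 4" using assms(4) nnn by simp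
  have mx: "int nn \<ge> max r (4 - r)" using assms(5) nnn by simp
  interpret M: mctx r nn N
    by (rule mctx.intro[OF assms(1) nn1 oddnn mm mx Ndef])
  have "(\<Sum>k<nat n. qint (8 * int k + r)
        * (qpoch (qvar powi r) (qvar ^ 4) k) ^ 4 / (qpoch (qvar ^ 4) (qvar ^ 4) k) ^ 4
        * qvar powi ((4 - 2 * r) * int k)) = (\<Sum>k<nn. Tf r 2 k)"
    unfolding nn_def by (rule sum.cong[OF refl]) (simp only: Tf_2)
  then show ?thesis using M.main_cong by (simp only: nn_def)
qed
end
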